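(* For a function $H:\{0,1\}^{u+1}\to\{0,1\}^v$ let $|\psi_H\rangle:=\sum_{R\in\{0,1\}^{u+1}}|R\rangle|H(R)\rangle$ (normalized). For every integer $m$ and every (unbounded-time) quantum algorithm $\mathcal{A}$, $$\Pr_H\big[y_0=H(0\|r)\wedge y_1=H(1\|r):(r,y_0,y_1)\gets\mathcal{A}(|\psi_H\rangle^{\otimes m})\big]\le(2m+1)^4(2^{-u}+2^{-v}),$$ where $H$ is a uniformly random function from $\{0,1\}^{u+1}$ to $\{0,1\}^v$ and $r\in\{0,1\}^u$.
   Context: $\|$ denotes concatenation of bit strings; $u,v$ are positive integers. *)

theory Defs
  imports Complex_Main "HOL-Library.FuncSet"
begin

text \<open>Bit strings of length n, as boolean lists; concatenation is list append / Cons.\<close>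
definition bits :: "nat \<Rightarrow> bool list set" where
  "bits n = {xs. length xs = n}"

text \<open>Computational basis of the m-fold tensor power of the register space
  C^({0,1}^(u+1)) (x) C^({0,1}^v): lists of m pairs (R, y).\<close>
definition basis :: "nat \<Rightarrow> nat \<Rightarrow> nat \<Rightarrow> (bool list \<times> bool list) list set" where
  "basis u v m = {xs. length xs = m \<and> (\<forall>p\<in>set xs. fst p \<in> bits (u+1) \<and> snd p \<in> bits v)}"

text \<open>Amplitudes of the normalized state psi_H = 2^(-(u+1)/2) sum_R |R>|H(R)>.\<close>
definition psi :: "nat \<Rightarrow> (bool list \<Rightarrow> bool list) \<Rightarrow> bool list \<times> bool list \<Rightarrow> complex" where
  "psi u H p = (if snd p = H (fst p) then complex_of_real (1 / sqrt (2 ^ (u+1))) else 0)"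

definition psi_tensor :: "nat \<Rightarrow> (bool list \<Rightarrow> bool list) \<Rightarrow> (bool list \<times> bool list) list \<Rightarrow> complex" where
  "psi_tensor u H xs = prod_list (map (psi u H) xs)"

definition psd :: "'b set \<Rightarrow> ('b \<Rightarrow> 'b \<Rightarrow> complex) \<Rightarrow> bool" where
  "psd S A \<longleftrightarrow> (\<forall>a\<in>S. \<forall>b\<in>S. A a b = cnj (A b a)) \<and>
     (\<forall>w :: 'b \<Rightarrow> complex. let q = (\<Sum>a\<in>S. \<Sum>b\<in>S. cnj (w a) * A a b * w b) in Im q = 0 \<and> Re q \<ge> 0)"

definition is_povm :: "'b set \<Rightarrow> 'o set \<Rightarrow> ('o \<Rightarrow> 'b \<Rightarrow> 'b \<Rightarrow> complex) \<Rightarrow> bool" where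
  "is_povm S Outs M \<longleftrightarrow> (\<forall>oc\<in>Outs. psd S (M oc)) \<and>
     (\<forall>a\<in>S. \<forall>b\<in>S. (\<Sum>oc\<in>Outs. M oc a b) = (if a = b then 1 else 0))"

definition outcome_prob :: "'b set \<Rightarrow> ('o \<Rightarrow> 'b \<Rightarrow> 'b \<Rightarrow> complex) \<Rightarrow> 'o \<Rightarrow> ('b \<Rightarrow> complex) \<Rightarrow> real" where
  "outcome_prob S M oc phi = Re (\<Sum>a\<in>S. \<Sum>b\<in>S. cnj (phi a) * M oc a b * phi b)"

definition outputs :: "nat \<Rightarrow> nat \<Rightarrow> (bool list \<times> bool list \<times> bool list) set" where
  "outputs u v = bits u \<times> bits v \<times> bits v"

text \<open>Success probability over a uniformly random H : {0,1}^(u+1) -> {0,1}^v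
  of the algorithm described by POVM M on input psi_H^{(x) m}.\<close>
definition success_prob :: "nat \<Rightarrow> nat \<Rightarrow> nat \<Rightarrow>
    (bool list \<times> bool list \<times> bool list \<Rightarrow> (bool list \<times> bool list) list \<Rightarrow> (bool list \<times> bool list) list \<Rightarrow> complex) \<Rightarrow> real" where
  "success_prob u v m M =
     (\<Sum>H\<in>bits (u+1) \<rightarrow>\<^sub>E bits v.
        \<Sum>oc\<in>{(r, y0, y1) \<in> outputs u v. y0 = H (False # r) \<and> y1 = H (True # r)}.
          outcome_prob (basis u v m) M oc (psi_tensor u H))
     / real (card (bits (u+1) \<rightarrow>\<^sub>E bits v))"

end

theory Submission imports Defs begin


definition nrm2 :: "'b set \<Rightarrow> ('b \<Rightarrow> complex) \<Rightarrow> real" where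
  "nrm2 S w = (\<Sum>a\<in>S. (cmod (w a))^2)"

lemma op_cong: "(\<And>a. a \<in> S \<Longrightarrow> w a = w' a) \<Longrightarrow> outcome_prob S M oc w = outcome_prob S M oc w'"
  unfolding outcome_prob_def by (auto intro!: sum.cong arg_cong[where f=Re])

lemma op_nonneg: "is_povm S Outs M \<Longrightarrow> oc \<in> Outs \<Longrightarrow> 0 \<le> outcome_prob S M oc w"
  unfolding is_povm_def psd_def outcome_prob_def Let_def by blast

lemma op_sum:
  assumes "is_povm S Outs M" "finite S" "finite Outs"
  shows "(\<Sum>oc\<in>Outs. outcome_prob S M oc w) = nrm2 S w"
proof -
  have "(\<Sum>oc\<in>Outs. \<Sum>a\<in>S. \<Sum>b\<in>S. cnj (w a) * M oc a b * w b)
      = (\<Sum>a\<in>S. \<Sum>b\<in>S. cnj (w a) * (\<Sum>oc\<in>Outs. M oc a b) * w b)"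
    by (simp add: sum.swap[of _ Outs] sum_distrib_left sum_distrib_right)
  also have "\<dots> = (\<Sum>a\<in>S. cnj (w a) * w a)"
  proof (rule sum.cong[OF refl])
    fix a assume a: "a \<in> S"
    have "(\<Sum>b\<in>S. cnj (w a) * (\<Sum>oc\<in>Outs. M oc a b) * w b) = (\<Sum>b\<in>S. if a = b then cnj (w a) * w b else 0)"
      using assms(1) a unfolding is_povm_def by (intro sum.cong refl) auto
    also have "\<dots> = cnj (w a) * w a" by (subst sum.delta'[OF assms(2)]) (simp add: a)
    finally show "(\<Sum>b\<in>S. cnj (w a) * (\<Sum>oc\<in>Outs. M oc a b) * w b) = cnj (w a) * w a" .
  qed
  finally have e: "(\<Sum>oc\<in>Outs. \<Sum>a\<in>S. \<Sum>b\<in>S. cnj (w a) * M oc a b * w b) = (\<Sum>a\<in>S. cnj (w a) * w a)" .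
  have "(\<Sum>oc\<in>Outs. outcome_prob S M oc w) = Re (\<Sum>oc\<in>Outs. \<Sum>a\<in>S. \<Sum>b\<in>S. cnj (w a) * M oc a b * w b)"
    unfolding outcome_prob_def by simp
  also have "\<dots> = (\<Sum>a\<in>S. Re (cnj (w a) * w a))" by (simp add: e)
  also have "\<dots> = nrm2 S w" unfolding nrm2_def
    by (intro sum.cong refl) (simp add: complex_mult_cnj cmod_def power2_eq_square)
  finally show ?thesis .
qed

lemma op_inj_le:
  assumes "is_povm S Outs M" "finite S" "finite Outs" "inj_on g Z" "g ` Z \<subseteq> Outs"
  shows "(\<Sum>z\<in>Z. outcome_prob S M (g z) w) \<le> nrm2 S w"
proof -
  have fZ: "finite Z" using assms(3,4,5) finite_imageD finite_subset by blast
  have "(\<Sum>z\<in>Z. outcome_prob S M (g z) w) = (\<Sum>oc\<in>g ` Z. outcome_prob S M oc w)"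
    using sum.reindex[OF assms(4), of "\<lambda>oc. outcome_prob S M oc w"] by simp
  also have "\<dots> \<le> (\<Sum>oc\<in>Outs. outcome_prob S M oc w)"
    by (rule sum_mono2[OF assms(3,5)]) (use op_nonneg[OF assms(1)] in auto)
  finally show ?thesis using op_sum[OF assms(1-3)] by simp
qed

lemma op_single_le:
  assumes "is_povm S Outs M" "finite S" "finite Outs" "oc \<in> Outs"
  shows "outcome_prob S M oc w \<le> nrm2 S w"
  using op_inj_le[OF assms(1-3), of id "{oc}"] assms(4) by simp

lemma op_par:
  "outcome_prob S M oc (\<lambda>a. x a + y a) + outcome_prob S M oc (\<lambda>a. x a - y a)
   = 2 * outcome_prob S M oc x + 2 * outcome_prob S M oc y"
proof -
  have "\<And>a b. cnj (x a + y a) * M oc a b * (x b + y b) + cnj (x a - y a) * M oc a b * (x b - y b)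
     = 2 * (cnj (x a) * M oc a b * x b) + 2 * (cnj (y a) * M oc a b * y b)"
    by (simp add: algebra_simps)
  hence "(\<Sum>a\<in>S. \<Sum>b\<in>S. cnj (x a + y a) * M oc a b * (x b + y b)) + (\<Sum>a\<in>S. \<Sum>b\<in>S. cnj (x a - y a) * M oc a b * (x b - y b))
     = 2 * (\<Sum>a\<in>S. \<Sum>b\<in>S. cnj (x a) * M oc a b * x b) + 2 * (\<Sum>a\<in>S. \<Sum>b\<in>S. cnj (y a) * M oc a b * y b)"
    by (simp add: sum.distrib[symmetric] sum_distrib_left)
  hence "Re ((\<Sum>a\<in>S. \<Sum>b\<in>S. cnj (x a + y a) * M oc a b * (x b + y b)) + (\<Sum>a\<in>S. \<Sum>b\<in>S. cnj (x a - y a) * M oc a b * (x b - y b)))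
     = Re (2 * (\<Sum>a\<in>S. \<Sum>b\<in>S. cnj (x a) * M oc a b * x b) + 2 * (\<Sum>a\<in>S. \<Sum>b\<in>S. cnj (y a) * M oc a b * y b))"
    by simp
  thus ?thesis unfolding outcome_prob_def by simp
qed

lemma op_add_le:
  assumes "is_povm S Outs M" "oc \<in> Outs"
  shows "outcome_prob S M oc (\<lambda>a. x a + y a) \<le> 2 * outcome_prob S M oc x + 2 * outcome_prob S M oc y"
  using op_par[of S M oc x y] op_nonneg[OF assms, of "\<lambda>a. x a - y a"] by linarith

lemma op_diff_le:
  assumes "is_povm S Outs M" "oc \<in> Outs"
  shows "outcome_prob S M oc (\<lambda>a. x a - y a) \<le> 2 * outcome_prob S M oc x + 2 * outcome_prob S M oc y"
  using op_par[of S M oc x y] op_nonneg[OF assms, of "\<lambda>a. x a + y a"] by linarith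


definition LL :: "'a set \<Rightarrow> nat \<Rightarrow> 'a list set" where
  "LL X m = {xs. set xs \<subseteq> X \<and> length xs = m}"

lemma LL_finite: "finite X \<Longrightarrow> finite (LL X m)"
  unfolding LL_def by (rule finite_lists_length_eq)

lemma LL_0: "LL X 0 = {[]}" unfolding LL_def by auto

lemma sum_LL_Suc:
  assumes "finite X"
  shows "(\<Sum>xs\<in>LL X (Suc m). g xs) = (\<Sum>x\<in>X. \<Sum>xs\<in>LL X m. g (x # xs))"
proof -
  have i: "inj_on (\<lambda>(xs, n). n # xs) (LL X m \<times> X)" by (auto simp: inj_on_def)
  have "(\<Sum>xs\<in>LL X (Suc m). g xs) = (\<Sum>xs\<in>(\<lambda>(xs, n). n # xs) ` (LL X m \<times> X). g xs)"
    unfolding LL_def lists_length_Suc_eq ..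
  also have "\<dots> = (\<Sum>(xs, n)\<in>LL X m \<times> X. g (n # xs))"
    by (subst sum.reindex[OF i]) (simp add: case_prod_unfold)
  also have "\<dots> = (\<Sum>xs\<in>LL X m. \<Sum>x\<in>X. g (x # xs))"
    by (simp add: sum.cartesian_product)
  also have "\<dots> = (\<Sum>x\<in>X. \<Sum>xs\<in>LL X m. g (x # xs))" by (rule sum.swap)
  finally show ?thesis .
qed

lemma prodl_nonneg: "(\<And>x. x \<in> set xs \<Longrightarrow> (p x::real) \<ge> 0) \<Longrightarrow> prod_list (map p xs) \<ge> 0"
  by (induction xs) auto

definition ind :: "bool \<Rightarrow> real" where "ind b = (if b then 1 else 0)"

lemma E0:
  assumes "finite X" "(\<Sum>x\<in>X. p x) = (1::real)"
  shows "(\<Sum>xs\<in>LL X m. prod_list (map p xs)) = 1"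
proof (induction m)
  case 0 then show ?case by (simp add: LL_0)
next
  case (Suc m)
  have "(\<Sum>xs\<in>LL X (Suc m). prod_list (map p xs)) = (\<Sum>x\<in>X. p x * (\<Sum>xs\<in>LL X m. prod_list (map p xs)))"
    by (simp add: sum_LL_Suc[OF assms(1)] sum_distrib_left)
  also have "\<dots> = 1" using Suc assms(2) by simp
  finally show ?case .
qed

lemma E1:
  assumes "finite X" "(\<Sum>x\<in>X. p x) = (1::real)" "\<And>x. x \<in> X \<Longrightarrow> p x \<ge> 0"
  shows "(\<Sum>xs\<in>LL X m. prod_list (map p xs) * ind (A \<in> fst ` set xs))
     \<le> m * (\<Sum>x\<in>X. p x * ind (fst x = A))"
proof (induction m)
  case 0 then show ?case by (simp add: LL_0 ind_def)
next
  case (Suc m)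
  let ?a = "(\<Sum>x\<in>X. p x * ind (fst x = A))"
  have P0: "prod_list (map p xs) \<ge> 0" if "xs \<in> LL X k" for xs k
    using that assms(3) unfolding LL_def by (intro prodl_nonneg) auto
  have "(\<Sum>xs\<in>LL X (Suc m). prod_list (map p xs) * ind (A \<in> fst ` set xs))
     = (\<Sum>x\<in>X. \<Sum>xs\<in>LL X m. p x * (prod_list (map p xs) * ind (A = fst x \<or> A \<in> fst ` set xs)))"
    by (simp add: sum_LL_Suc[OF assms(1)] mult.assoc)
  also have "\<dots> \<le> (\<Sum>x\<in>X. \<Sum>xs\<in>LL X m. p x * (prod_list (map p xs) * (ind (fst x = A) + ind (A \<in> fst ` set xs))))"
    apply (intro sum_mono mult_left_mono)
    using P0 assms(3) by (auto simp: ind_def)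
  also have "\<dots> = (\<Sum>x\<in>X. \<Sum>xs\<in>LL X m. (p x * ind (fst x = A)) * prod_list (map p xs)
      + p x * (prod_list (map p xs) * ind (A \<in> fst ` set xs)))"
    by (intro sum.cong refl) (simp add: algebra_simps)
  also have "\<dots> = (\<Sum>x\<in>X. p x * ind (fst x = A)) * (\<Sum>xs\<in>LL X m. prod_list (map p xs))
      + (\<Sum>x\<in>X. p x) * (\<Sum>xs\<in>LL X m. prod_list (map p xs) * ind (A \<in> fst ` set xs))"
    by (simp only: sum.distrib sum_product)
  also have "\<dots> \<le> ?a + m * ?a" using Suc E0[OF assms(1,2), of m] assms(2) by simp
  finally show ?case by (simp add: algebra_simps)
qed

lemma E2:
  assumes "finite X" "(\<Sum>x\<in>X. p x) = (1::real)" "\<And>x. x \<in> X \<Longrightarrow> p x \<ge> 0" "A \<noteq> B"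
  shows "(\<Sum>xs\<in>LL X m. prod_list (map p xs) * ind (A \<in> fst ` set xs \<and> B \<in> fst ` set xs))
     \<le> m^2 * (\<Sum>x\<in>X. p x * ind (fst x = A)) * (\<Sum>x\<in>X. p x * ind (fst x = B))"
proof (induction m)
  case 0 then show ?case by (simp add: LL_0 ind_def)
next
  case (Suc m)
  let ?a = "(\<Sum>x\<in>X. p x * ind (fst x = A))"
  let ?b = "(\<Sum>x\<in>X. p x * ind (fst x = B))"
  let ?P = "\<lambda>xs. prod_list (map p xs)"
  have P0: "prod_list (map p xs) \<ge> 0" if "xs \<in> LL X k" for xs k
    using that assms(3) unfolding LL_def by (intro prodl_nonneg) auto
  have a0: "?a \<ge> 0" "?b \<ge> 0" using assms(3) by (auto intro!: sum_nonneg simp: ind_def)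
  have "(\<Sum>xs\<in>LL X (Suc m). ?P xs * ind (A \<in> fst ` set xs \<and> B \<in> fst ` set xs))
     = (\<Sum>x\<in>X. \<Sum>xs\<in>LL X m. p x * (?P xs * ind ((A = fst x \<or> A \<in> fst ` set xs) \<and> (B = fst x \<or> B \<in> fst ` set xs))))"
    by (simp add: sum_LL_Suc[OF assms(1)] mult.assoc)
  also have "\<dots> \<le> (\<Sum>x\<in>X. \<Sum>xs\<in>LL X m. p x * (?P xs * (ind (fst x = A) * ind (B \<in> fst ` set xs)
      + ind (fst x = B) * ind (A \<in> fst ` set xs) + ind (A \<in> fst ` set xs \<and> B \<in> fst ` set xs))))"
    apply (intro sum_mono mult_left_mono)
    using P0 assms(3,4) by (auto simp: ind_def)
  also have "\<dots> = (\<Sum>x\<in>X. \<Sum>xs\<in>LL X m. (p x * ind (fst x = A)) * (?P xs * ind (B \<in> fst ` set xs))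
      + (p x * ind (fst x = B)) * (?P xs * ind (A \<in> fst ` set xs))
      + p x * (?P xs * ind (A \<in> fst ` set xs \<and> B \<in> fst ` set xs)))"
    by (intro sum.cong refl) (simp add: algebra_simps)
  also have "\<dots> = (\<Sum>x\<in>X. p x * ind (fst x = A)) * (\<Sum>xs\<in>LL X m. ?P xs * ind (B \<in> fst ` set xs))
      + (\<Sum>x\<in>X. p x * ind (fst x = B)) * (\<Sum>xs\<in>LL X m. ?P xs * ind (A \<in> fst ` set xs))
      + (\<Sum>x\<in>X. p x) * (\<Sum>xs\<in>LL X m. ?P xs * ind (A \<in> fst ` set xs \<and> B \<in> fst ` set xs))"
    by (simp only: sum.distrib sum_product)
  also have "\<dots> \<le> ?a * (m * ?b) + ?b * (m * ?a) + m^2 * ?a * ?b"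
    using Suc E1[OF assms(1,2,3), where m=m and A=A] E1[OF assms(1,2,3), where m=m and A=B] assms(2) a0
    by (intro add_mono mult_left_mono) auto
  also have "\<dots> \<le> (real (Suc m))^2 * ?a * ?b" using a0
    by (simp add: algebra_simps power2_eq_square)
  finally show ?case .
qed


lemma upd_PiE: "H \<in> (A \<rightarrow>\<^sub>E B) \<Longrightarrow> p \<in> A \<Longrightarrow> c \<in> B \<Longrightarrow> H(p := c) \<in> (A \<rightarrow>\<^sub>E B)"
  by (auto simp: PiE_iff extensional_def)

lemma ind_mult: "ind b * x = (if b then x else 0)" by (simp add: ind_def)

lemma one_point:
  fixes f :: "('a \<Rightarrow> 'b) \<Rightarrow> real"
  assumes fA: "finite A" and fB: "finite B" and pA: "p \<in> A" and yB: "y \<in> B"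
    and indep: "\<And>H c. H \<in> (A \<rightarrow>\<^sub>E B) \<Longrightarrow> c \<in> B \<Longrightarrow> f (H(p:=c)) = f H"
  shows "(\<Sum>H\<in>(A \<rightarrow>\<^sub>E B). ind (H p = y) * f H) = (\<Sum>H\<in>(A \<rightarrow>\<^sub>E B). f H) / card B"
proof -
  let ?F = "(A \<rightarrow>\<^sub>E B)"
  have fF: "finite ?F" by (simp add: finite_PiE fA fB)
  have eqc: "(\<Sum>H\<in>?F. ind (H p = c) * f H) = (\<Sum>H\<in>?F. ind (H p = y) * f H)" if cB: "c \<in> B" for c
  proof -
    have "(\<Sum>H\<in>?F. ind (H p = c) * f H) = (\<Sum>H\<in>{H\<in>?F. H p = c}. f H)"
      by (simp add: ind_mult sum.inter_filter[OF fF])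
    also have "\<dots> = (\<Sum>H\<in>{H\<in>?F. H p = y}. f H)"
    proof (rule sum.reindex_bij_witness[where i = "\<lambda>H. H(p := c)" and j = "\<lambda>H. H(p := y)"])
      fix H assume "H \<in> {H\<in>?F. H p = c}"
      thus "H(p := y, p := c) = H" "H(p := y) \<in> {H\<in>?F. H p = y}" "f (H(p := y)) = f H"
        using upd_PiE[OF _ pA yB] indep[of H y] yB by auto
    next
      fix H assume "H \<in> {H\<in>?F. H p = y}"
      thus "H(p := c, p := y) = H" "H(p := c) \<in> {H\<in>?F. H p = c}"
        using upd_PiE[OF _ pA cB] by auto
    qed
    also have "\<dots> = (\<Sum>H\<in>?F. ind (H p = y) * f H)"
      by (simp add: ind_mult sum.inter_filter[OF fF])
    finally show ?thesis .
  qed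
  have "(\<Sum>H\<in>?F. f H) = (\<Sum>H\<in>?F. \<Sum>c\<in>B. ind (H p = c) * f H)"
  proof (rule sum.cong[OF refl])
    fix H assume "H \<in> ?F"
    hence "H p \<in> B" using pA by auto
    thus "f H = (\<Sum>c\<in>B. ind (H p = c) * f H)"
      by (simp add: ind_mult sum.delta'[OF fB])
  qed
  also have "\<dots> = (\<Sum>c\<in>B. \<Sum>H\<in>?F. ind (H p = c) * f H)" by (rule sum.swap)
  also have "\<dots> = (\<Sum>c\<in>B. \<Sum>H\<in>?F. ind (H p = y) * f H)" using eqc by simp
  also have "\<dots> = card B * (\<Sum>H\<in>?F. ind (H p = y) * f H)" by simp
  finally show ?thesis using fB yB card_gt_0_iff[of B] by (auto simp: field_simps)
qed


lemma bits_eq: "bits n = {xs. set xs \<subseteq> (UNIV::bool set) \<and> length xs = n}"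
  unfolding bits_def by auto

lemma finite_bits: "finite (bits n)"
  unfolding bits_eq by (rule finite_lists_length_eq) simp

lemma card_bits: "card (bits n) = 2 ^ n"
  unfolding bits_eq by (subst card_lists_length_eq) simp_all

abbreviation XX :: "nat \<Rightarrow> nat \<Rightarrow> (bool list \<times> bool list) set" where
  "XX u v \<equiv> bits (u+1) \<times> bits v"

lemma basis_LL: "basis u v m = LL (XX u v) m"
  unfolding basis_def LL_def by auto

lemma finite_basis: "finite (basis u v m)"
  unfolding basis_LL by (rule LL_finite) (simp add: finite_bits)

lemma finite_outputs: "finite (outputs u v)"
  unfolding outputs_def by (simp add: finite_bits)

definition pw :: "nat \<Rightarrow> (bool list \<Rightarrow> bool list) \<Rightarrow> bool list \<times> bool list \<Rightarrow> real" where
  "pw u H x = ind (snd x = H (fst x)) / 2 ^ (u+1)"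

lemma cmod_psi: "(cmod (psi u H x))^2 = pw u H x"
  unfolding psi_def pw_def ind_def by (simp add: norm_divide power_divide real_sqrt_pow2)

lemma cmod_psi_tensor: "(cmod (psi_tensor u H xs))^2 = prod_list (map (pw u H) xs)"
  unfolding psi_tensor_def
  by (induction xs) (simp_all add: norm_mult power_mult_distrib cmod_psi)

lemma pw_nonneg: "pw u H x \<ge> 0" unfolding pw_def ind_def by simp

lemma sum_pw_A:
  assumes "H \<in> bits (u+1) \<rightarrow>\<^sub>E bits v" "A \<in> bits (u+1)"
  shows "(\<Sum>x\<in>XX u v. pw u H x * ind (fst x = A)) = 1 / 2^(u+1)"
proof -
  have "(\<Sum>x\<in>XX u v. pw u H x * ind (fst x = A)) = (\<Sum>R\<in>bits (u+1). \<Sum>y\<in>bits v. pw u H (R, y) * ind (R = A))"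
    by (subst sum.cartesian_product) (simp add: case_prod_beta)
  also have "\<dots> = (\<Sum>R\<in>bits (u+1). if R = A then (\<Sum>y\<in>bits v. pw u H (R, y)) else 0)"
    by (intro sum.cong refl) (simp add: ind_def)
  also have "\<dots> = (\<Sum>y\<in>bits v. pw u H (A, y))"
    using assms(2) by (subst sum.delta[OF finite_bits]) simp
  also have "\<dots> = (\<Sum>y\<in>bits v. if y = H A then 1 / 2^(u+1) else 0)"
    unfolding pw_def ind_def by (intro sum.cong refl) simp
  also have "\<dots> = 1 / 2^(u+1)" using assms by (subst sum.delta[OF finite_bits]) auto
  finally show ?thesis .
qed

lemma sum_ind_eq: "a \<in> S \<Longrightarrow> finite S \<Longrightarrow> (\<Sum>A\<in>S. ind (a = A)) = 1"
  by (simp add: ind_def)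

lemma sum_pw:
  assumes "H \<in> bits (u+1) \<rightarrow>\<^sub>E bits v"
  shows "(\<Sum>x\<in>XX u v. pw u H x) = 1"
proof -
  have "(\<Sum>x\<in>XX u v. pw u H x) = (\<Sum>x\<in>XX u v. \<Sum>A\<in>bits (u+1). pw u H x * ind (fst x = A))"
    by (intro sum.cong refl) (auto simp: sum_distrib_left[symmetric] sum_ind_eq finite_bits)
  also have "\<dots> = (\<Sum>A\<in>bits (u+1). \<Sum>x\<in>XX u v. pw u H x * ind (fst x = A))" by (rule sum.swap)
  also have "\<dots> = (\<Sum>A\<in>bits (u+1). 1 / 2^(u+1))" using sum_pw_A[OF assms] by simp
  also have "\<dots> = 1" by (simp add: card_bits)
  finally show ?thesis .
qed

lemma nrm2_restrict: "nrm2 S (\<lambda>a. if P a then w a else 0) = (\<Sum>a\<in>S. (cmod (w a))^2 * ind (P a))"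
  unfolding nrm2_def ind_def by (intro sum.cong refl) simp

lemma nrm_psi: "H \<in> bits (u+1) \<rightarrow>\<^sub>E bits v \<Longrightarrow> nrm2 (basis u v m) (psi_tensor u H) = 1"
  unfolding nrm2_def basis_LL cmod_psi_tensor
  by (rule E0) (simp_all add: finite_bits sum_pw[of H u v, simplified])

lemma nrm_one:
  assumes "H \<in> bits (u+1) \<rightarrow>\<^sub>E bits v" "A \<in> bits (u+1)"
  shows "nrm2 (basis u v m) (\<lambda>xs. if A \<in> fst ` set xs then psi_tensor u H xs else 0) \<le> m / 2^(u+1)"
  unfolding nrm2_restrict basis_LL cmod_psi_tensor
  using E1[of "XX u v" "pw u H", where m=m and A=A] sum_pw[OF assms(1)] sum_pw_A[OF assms] pw_nonneg
  by (simp add: finite_bits)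

lemma nrm_two:
  assumes "H \<in> bits (u+1) \<rightarrow>\<^sub>E bits v" "A \<in> bits (u+1)" "B \<in> bits (u+1)" "A \<noteq> B"
  shows "nrm2 (basis u v m) (\<lambda>xs. if A \<in> fst ` set xs \<and> B \<in> fst ` set xs then psi_tensor u H xs else 0)
    \<le> m^2 / 2^(u+1) / 2^(u+1)"
  unfolding nrm2_restrict basis_LL cmod_psi_tensor
  using E2[of "XX u v" "pw u H" A B, where m=m] sum_pw[OF assms(1)] sum_pw_A[OF assms(1,2)] sum_pw_A[OF assms(1,3)] pw_nonneg assms(4)
  by (simp add: finite_bits)

lemma psi_tensor_upd:
  "p \<notin> fst ` set xs \<Longrightarrow> psi_tensor u (H(p := c)) xs = psi_tensor u H xs"
  unfolding psi_tensor_def psi_def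
  by (rule arg_cong[where f=prod_list], rule map_cong) force+


definition gd :: "(bool list \<Rightarrow> bool list) \<Rightarrow> bool list \<times> bool list \<times> bool list \<Rightarrow> real" where
  "gd H oc = ind (fst (snd oc) = H (False # fst oc)) * ind (snd (snd oc) = H (True # fst oc))"

lemma outputs_split: "outputs u v = bits u \<times> (bits v \<times> bits v)"
  unfolding outputs_def by simp

lemma sum_outputs: "(\<Sum>oc\<in>outputs u v. g oc) = (\<Sum>r\<in>bits u. \<Sum>y0\<in>bits v. \<Sum>y1\<in>bits v. g (r, y0, y1))"
  unfolding outputs_split by (simp add: sum.cartesian_product)

lemma gd_select:
  assumes "H \<in> bits (u+1) \<rightarrow>\<^sub>E bits v"
  shows "(\<Sum>oc\<in>outputs u v. gd H oc * c (fst oc)) = (\<Sum>r\<in>bits u. c r)"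
proof -
  have "(\<Sum>oc\<in>outputs u v. gd H oc * c (fst oc))
     = (\<Sum>r\<in>bits u. \<Sum>y0\<in>bits v. \<Sum>y1\<in>bits v. ind (y0 = H (False # r)) * ind (y1 = H (True # r)) * c r)"
    unfolding sum_outputs gd_def by simp
  also have "\<dots> = (\<Sum>r\<in>bits u. c r)"
  proof (rule sum.cong[OF refl])
    fix r assume r: "r \<in> bits u"
    have h0: "H (False # r) \<in> bits v" "H (True # r) \<in> bits v"
      using assms r by (auto simp: bits_def)
    have "(\<Sum>y0\<in>bits v. \<Sum>y1\<in>bits v. ind (y0 = H (False # r)) * ind (y1 = H (True # r)) * c r)
        = (\<Sum>y0\<in>bits v. ind (y0 = H (False # r)) * ((\<Sum>y1\<in>bits v. ind (y1 = H (True # r))) * c r))"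
      by (simp add: sum_distrib_left sum_distrib_right mult.assoc)
    also have "\<dots> = c r"
      using h0 by (simp add: ind_def finite_bits sum.delta' sum_distrib_right[symmetric] cong: if_cong)
    finally show "(\<Sum>y0\<in>bits v. \<Sum>y1\<in>bits v. ind (y0 = H (False # r)) * ind (y1 = H (True # r)) * c r) = c r" .
  qed
  finally show ?thesis .
qed

lemma fiber_le:
  assumes "is_povm (basis u v m) (outputs u v) M"
  shows "(\<Sum>oc\<in>outputs u v. outcome_prob (basis u v m) M oc (w (fst oc)))
     \<le> (\<Sum>r\<in>bits u. nrm2 (basis u v m) (w r))"
proof -
  have "(\<Sum>oc\<in>outputs u v. outcome_prob (basis u v m) M oc (w (fst oc)))
     = (\<Sum>r\<in>bits u. \<Sum>z\<in>bits v \<times> bits v. outcome_prob (basis u v m) M (Pair r z) (w r))"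
    unfolding outputs_split by (simp add: sum.cartesian_product case_prod_beta)
  also have "\<dots> \<le> (\<Sum>r\<in>bits u. nrm2 (basis u v m) (w r))"
  proof (rule sum_mono)
    fix r assume "r \<in> bits u"
    thus "(\<Sum>z\<in>bits v \<times> bits v. outcome_prob (basis u v m) M (Pair r z) (w r)) \<le> nrm2 (basis u v m) (w r)"
      by (intro op_inj_le[OF assms finite_basis finite_outputs]) (auto simp: outputs_split inj_on_def)
  qed
  finally show ?thesis .
qed

lemma avg_lemma:
  fixes g :: "'o \<Rightarrow> (bool list \<Rightarrow> bool list) \<Rightarrow> real"
  assumes "finite Os"
    and indep: "\<And>oc H c. oc \<in> Os \<Longrightarrow> H \<in> bits (u+1) \<rightarrow>\<^sub>E bits v \<Longrightarrow> c \<in> bits v \<Longrightarrow> g oc (H(p oc := c)) = g oc H"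
    and pA: "\<And>oc. oc \<in> Os \<Longrightarrow> p oc \<in> bits (u+1)"
    and yB: "\<And>oc. oc \<in> Os \<Longrightarrow> y oc \<in> bits v"
  shows "(\<Sum>oc\<in>Os. \<Sum>H\<in>bits (u+1) \<rightarrow>\<^sub>E bits v. ind (H (p oc) = y oc) * g oc H)
    = (\<Sum>H\<in>bits (u+1) \<rightarrow>\<^sub>E bits v. \<Sum>oc\<in>Os. g oc H) / 2^v"
proof -
  have "(\<Sum>oc\<in>Os. \<Sum>H\<in>bits (u+1) \<rightarrow>\<^sub>E bits v. ind (H (p oc) = y oc) * g oc H)
     = (\<Sum>oc\<in>Os. (\<Sum>H\<in>bits (u+1) \<rightarrow>\<^sub>E bits v. g oc H) / 2^v)"
  proof (rule sum.cong[OF refl])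
    fix oc assume oc: "oc \<in> Os"
    show "(\<Sum>H\<in>bits (u+1) \<rightarrow>\<^sub>E bits v. ind (H (p oc) = y oc) * g oc H) = (\<Sum>H\<in>bits (u+1) \<rightarrow>\<^sub>E bits v. g oc H) / 2^v"
      using one_point[OF finite_bits finite_bits pA[OF oc] yB[OF oc], of "g oc"] indep[OF oc]
      by (simp add: card_bits)
  qed
  also have "\<dots> = (\<Sum>H\<in>bits (u+1) \<rightarrow>\<^sub>E bits v. \<Sum>oc\<in>Os. g oc H) / 2^v"
    by (simp add: sum_divide_distrib[symmetric] sum.swap[of _ Os])
  finally show ?thesis .
qed


definition vnb where "vnb u H r = (\<lambda>xs. if True # r \<notin> fst ` set xs then psi_tensor u H xs else 0)"
definition vbb where "vbb u H r = (\<lambda>xs. if True # r \<in> fst ` set xs then psi_tensor u H xs else 0)"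
definition vbna where "vbna u H r = (\<lambda>xs. if True # r \<in> fst ` set xs \<and> False # r \<notin> fst ` set xs then psi_tensor u H xs else 0)"
definition vab where "vab u H r = (\<lambda>xs. if False # r \<in> fst ` set xs \<and> True # r \<in> fst ` set xs then psi_tensor u H xs else 0)"

lemma split1: "psi_tensor u H = (\<lambda>a. vnb u H r a + vbb u H r a)"
  unfolding vnb_def vbb_def by auto
lemma split2: "vbb u H r = (\<lambda>a. vbna u H r a + vab u H r a)"
  unfolding vbna_def vbb_def vab_def by auto
lemma split3: "vnb u H r = (\<lambda>a. psi_tensor u H a - vbb u H r a)"
  unfolding vnb_def vbb_def by auto

lemma indep_nb: "vnb u (H(True # r := c)) r = vnb u H r"
  unfolding vnb_def by (auto simp: psi_tensor_upd)
lemma indep_bna: "vbna u (H(False # r := c)) r = vbna u H r"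
  unfolding vbna_def by (auto simp: psi_tensor_upd)

lemma norm_bb:
  assumes "H \<in> bits (u+1) \<rightarrow>\<^sub>E bits v"
  shows "(\<Sum>r\<in>bits u. nrm2 (basis u v m) (vbb u H r)) \<le> m / 2"
proof -
  have "(\<Sum>r\<in>bits u. nrm2 (basis u v m) (vbb u H r)) \<le> (\<Sum>r\<in>bits u. m / 2^(u+1))"
    unfolding vbb_def by (intro sum_mono nrm_one[OF assms]) (auto simp: bits_def)
  also have "\<dots> = m / 2" by (simp add: card_bits)
  finally show ?thesis .
qed

lemma norm_bna:
  assumes "H \<in> bits (u+1) \<rightarrow>\<^sub>E bits v"
  shows "(\<Sum>r\<in>bits u. nrm2 (basis u v m) (vbna u H r)) \<le> m / 2"
proof -
  have "(\<Sum>r\<in>bits u. nrm2 (basis u v m) (vbna u H r)) \<le> (\<Sum>r\<in>bits u. nrm2 (basis u v m) (vbb u H r))"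
    unfolding vbna_def vbb_def nrm2_restrict
    by (intro sum_mono mult_left_mono) (auto simp: ind_def)
  thus ?thesis using norm_bb[OF assms, where m=m] by linarith
qed

lemma norm_ab:
  assumes "H \<in> bits (u+1) \<rightarrow>\<^sub>E bits v"
  shows "(\<Sum>r\<in>bits u. nrm2 (basis u v m) (vab u H r)) \<le> (real m)^2 / (4 * 2^u)"
proof -
  have "(\<Sum>r\<in>bits u. nrm2 (basis u v m) (vab u H r)) \<le> (\<Sum>r\<in>bits u. (real m)^2 / 2^(u+1) / 2^(u+1))"
  proof (rule sum_mono)
    fix r assume r: "r \<in> bits u"
    show "nrm2 (basis u v m) (vab u H r) \<le> (real m)^2 / 2^(u+1) / 2^(u+1)"
      unfolding vab_def by (rule nrm_two[OF assms]) (use r in \<open>auto simp: bits_def\<close>)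
  qed
  also have "\<dots> = (real m)^2 / (4 * 2^u)" by (simp add: card_bits power_add field_simps)
  finally show ?thesis .
qed

context
  fixes u v m :: nat and M
  assumes P: "is_povm (basis u v m) (outputs u v) M"
begin

abbreviation "Q oc w \<equiv> outcome_prob (basis u v m) M oc w"

lemma Qnn: "oc \<in> outputs u v \<Longrightarrow> Q oc w \<ge> 0" using op_nonneg[OF P] .

lemma Q_split:
  assumes "oc \<in> outputs u v"
  shows "Q oc (psi_tensor u H) \<le> 2 * Q oc (vnb u H r) + 4 * Q oc (vbna u H r) + 4 * Q oc (vab u H r)"
proof -
  have "Q oc (psi_tensor u H) \<le> 2 * Q oc (vnb u H r) + 2 * Q oc (vbb u H r)"
    using op_add_le[OF P assms, of "vnb u H r" "vbb u H r"] by (simp add: split1[symmetric])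
  moreover have "Q oc (vbb u H r) \<le> 2 * Q oc (vbna u H r) + 2 * Q oc (vab u H r)"
    using op_add_le[OF P assms, of "vbna u H r" "vab u H r"] by (simp add: split2[symmetric])
  ultimately show ?thesis by linarith
qed

lemma T1_inner:
  assumes "H \<in> bits (u+1) \<rightarrow>\<^sub>E bits v"
  shows "(\<Sum>oc\<in>outputs u v. Q oc (vnb u H (fst oc))) \<le> 2 + m"
proof -
  have "(\<Sum>oc\<in>outputs u v. Q oc (vnb u H (fst oc)))
     \<le> (\<Sum>oc\<in>outputs u v. 2 * Q oc (psi_tensor u H) + 2 * Q oc (vbb u H (fst oc)))"
  proof (rule sum_mono)
    fix oc assume oc: "oc \<in> outputs u v"
    show "Q oc (vnb u H (fst oc)) \<le> 2 * Q oc (psi_tensor u H) + 2 * Q oc (vbb u H (fst oc))"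
      using op_diff_le[OF P oc, of "psi_tensor u H" "vbb u H (fst oc)"] by (simp add: split3[symmetric])
  qed
  also have "\<dots> = 2 * (\<Sum>oc\<in>outputs u v. Q oc (psi_tensor u H)) + 2 * (\<Sum>oc\<in>outputs u v. Q oc (vbb u H (fst oc)))"
    by (simp add: sum.distrib sum_distrib_left)
  also have "\<dots> \<le> 2 * 1 + 2 * (m / 2)"
    using op_sum[OF P finite_basis finite_outputs] nrm_psi[OF assms, where m=m]
      fiber_le[OF P, of "vbb u H"] norm_bb[OF assms, where m=m] by simp
  finally show ?thesis by simp
qed

end


context
  fixes u v m :: nat and M
  assumes P: "is_povm (basis u v m) (outputs u v) M"
begin

abbreviation "FF \<equiv> bits (u+1) \<rightarrow>\<^sub>E bits v"

lemma T1_eq: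
  "(\<Sum>oc\<in>outputs u v. \<Sum>H\<in>FF. ind (H (True # fst oc) = snd (snd oc)) * Q u v m M oc (vnb u H (fst oc)))
   = (\<Sum>H\<in>FF. \<Sum>oc\<in>outputs u v. Q u v m M oc (vnb u H (fst oc))) / 2^v"
  by (rule avg_lemma[OF finite_outputs]) (auto simp: indep_nb outputs_def bits_def)

lemma T2_eq:
  "(\<Sum>oc\<in>outputs u v. \<Sum>H\<in>FF. ind (H (False # fst oc) = fst (snd oc)) * Q u v m M oc (vbna u H (fst oc)))
   = (\<Sum>H\<in>FF. \<Sum>oc\<in>outputs u v. Q u v m M oc (vbna u H (fst oc))) / 2^v"
  by (rule avg_lemma[OF finite_outputs]) (auto simp: indep_bna outputs_def bits_def)

lemma T1_le:
  "(\<Sum>oc\<in>outputs u v. \<Sum>H\<in>FF. ind (H (True # fst oc) = snd (snd oc)) * Q u v m M oc (vnb u H (fst oc)))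
   \<le> card FF * (2 + m) / 2^v"
proof -
  have "(\<Sum>H\<in>FF. \<Sum>oc\<in>outputs u v. Q u v m M oc (vnb u H (fst oc))) \<le> (\<Sum>H\<in>FF. 2 + real m)"
    by (rule sum_mono) (use T1_inner[OF P] in auto)
  thus ?thesis unfolding T1_eq by (intro divide_right_mono) (auto simp: algebra_simps)
qed

lemma T2_le:
  "(\<Sum>oc\<in>outputs u v. \<Sum>H\<in>FF. ind (H (False # fst oc) = fst (snd oc)) * Q u v m M oc (vbna u H (fst oc)))
   \<le> card FF * (m / 2) / 2^v"
proof -
  have "(\<Sum>H\<in>FF. \<Sum>oc\<in>outputs u v. Q u v m M oc (vbna u H (fst oc))) \<le> (\<Sum>H\<in>FF. m / 2)"
  proof (rule sum_mono)
    fix H assume H: "H \<in> FF"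
    show "(\<Sum>oc\<in>outputs u v. Q u v m M oc (vbna u H (fst oc))) \<le> m / 2"
      using fiber_le[OF P, of "vbna u H"] norm_bna[OF H, where m=m] by linarith
  qed
  thus ?thesis unfolding T2_eq by (intro divide_right_mono) auto
qed

lemma T3_le:
  "(\<Sum>H\<in>FF. \<Sum>oc\<in>outputs u v. gd H oc * Q u v m M oc (vab u H (fst oc)))
   \<le> card FF * ((real m)^2 / (4 * 2^u))"
proof -
  have "(\<Sum>H\<in>FF. \<Sum>oc\<in>outputs u v. gd H oc * Q u v m M oc (vab u H (fst oc))) \<le> (\<Sum>H\<in>FF. (real m)^2 / (4 * 2^u))"
  proof (rule sum_mono)
    fix H assume H: "H \<in> FF"
    have "(\<Sum>oc\<in>outputs u v. gd H oc * Q u v m M oc (vab u H (fst oc)))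
       \<le> (\<Sum>oc\<in>outputs u v. gd H oc * nrm2 (basis u v m) (vab u H (fst oc)))"
      by (intro sum_mono mult_left_mono op_single_le[OF P finite_basis finite_outputs])
        (auto simp: gd_def ind_def)
    also have "\<dots> = (\<Sum>r\<in>bits u. nrm2 (basis u v m) (vab u H r))" by (rule gd_select[OF H])
    also have "\<dots> \<le> (real m)^2 / (4 * 2^u)" by (rule norm_ab[OF H])
    finally show "(\<Sum>oc\<in>outputs u v. gd H oc * Q u v m M oc (vab u H (fst oc))) \<le> (real m)^2 / (4 * 2^u)" .
  qed
  thus ?thesis by simp
qed

lemma main_pos:
  "(\<Sum>H\<in>FF. \<Sum>oc\<in>outputs u v. gd H oc * Q u v m M oc (psi_tensor u H))
   \<le> card FF * ((4 + 4 * m) / 2^v + (real m)^2 / 2^u)"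
proof -
  let ?i1 = "\<lambda>H oc. ind (H (True # fst oc) = snd (snd oc))"
  let ?i0 = "\<lambda>H oc. ind (H (False # fst oc) = fst (snd oc))"
  have "(\<Sum>H\<in>FF. \<Sum>oc\<in>outputs u v. gd H oc * Q u v m M oc (psi_tensor u H))
     \<le> (\<Sum>H\<in>FF. \<Sum>oc\<in>outputs u v. 2 * (?i1 H oc * Q u v m M oc (vnb u H (fst oc)))
          + 4 * (?i0 H oc * Q u v m M oc (vbna u H (fst oc))) + 4 * (gd H oc * Q u v m M oc (vab u H (fst oc))))"
  proof (intro sum_mono)
    fix H oc assume oc: "oc \<in> outputs u v"
    note s = Q_split[OF P oc, of H "fst oc"]
    note n = Qnn[OF P oc]
    show "gd H oc * Q u v m M oc (psi_tensor u H) \<le> 2 * (?i1 H oc * Q u v m M oc (vnb u H (fst oc)))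
          + 4 * (?i0 H oc * Q u v m M oc (vbna u H (fst oc))) + 4 * (gd H oc * Q u v m M oc (vab u H (fst oc)))"
      using s n[of "vnb u H (fst oc)"] n[of "vbna u H (fst oc)"] n[of "vab u H (fst oc)"]
      by (auto simp: gd_def ind_def)
  qed
  also have "\<dots> = 2 * (\<Sum>oc\<in>outputs u v. \<Sum>H\<in>FF. ?i1 H oc * Q u v m M oc (vnb u H (fst oc)))
      + 4 * (\<Sum>oc\<in>outputs u v. \<Sum>H\<in>FF. ?i0 H oc * Q u v m M oc (vbna u H (fst oc)))
      + 4 * (\<Sum>H\<in>FF. \<Sum>oc\<in>outputs u v. gd H oc * Q u v m M oc (vab u H (fst oc)))"
    by (simp add: sum.distrib sum_distrib_left sum.swap[of _ "outputs u v"])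
  also have "\<dots> \<le> 2 * (card FF * (2 + m) / 2^v) + 4 * (card FF * (m / 2) / 2^v)
      + 4 * (card FF * ((real m)^2 / (4 * 2^u)))"
    using T1_le T2_le T3_le by linarith
  also have "\<dots> = card FF * ((4 + 4 * m) / 2^v + (real m)^2 / 2^u)"
    by (simp add: field_simps)
  finally show ?thesis .
qed

lemma main_zero:
  assumes m0: "m = 0"
  shows "(\<Sum>H\<in>FF. \<Sum>oc\<in>outputs u v. gd H oc * Q u v m M oc (psi_tensor u H)) \<le> card FF / 2^v"
proof -
  have eqQ: "Q u v m M oc (psi_tensor u H) = Q u v m M oc (vnb u H r)" for oc H r
    by (rule op_cong) (auto simp: m0 basis_def vnb_def)
  have "(\<Sum>H\<in>FF. \<Sum>oc\<in>outputs u v. gd H oc * Q u v m M oc (psi_tensor u H))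
      \<le> (\<Sum>H\<in>FF. \<Sum>oc\<in>outputs u v. ind (H (True # fst oc) = snd (snd oc)) * Q u v m M oc (vnb u H (fst oc)))"
  proof (intro sum_mono)
    fix H oc assume oc: "oc \<in> outputs u v"
    show "gd H oc * Q u v m M oc (psi_tensor u H) \<le> ind (H (True # fst oc) = snd (snd oc)) * Q u v m M oc (vnb u H (fst oc))"
      using Qnn[OF P oc, of "vnb u H (fst oc)"] eqQ[of oc H "fst oc"] by (auto simp: gd_def ind_def)
  qed
  also have "\<dots> = (\<Sum>H\<in>FF. \<Sum>oc\<in>outputs u v. Q u v m M oc (vnb u H (fst oc))) / 2^v"
    by (subst sum.swap) (rule T1_eq)
  also have "\<dots> = (\<Sum>H\<in>FF. 1) / 2^v"
  proof -
    have "(\<Sum>oc\<in>outputs u v. Q u v m M oc (vnb u H (fst oc))) = 1" if H: "H \<in> FF" for H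
      using op_sum[OF P finite_basis finite_outputs, of "psi_tensor u H"] nrm_psi[OF H, where m=m]
        eqQ[of _ H] by simp
    thus ?thesis by simp
  qed
  finally show ?thesis by simp
qed

end


lemma good_set_sum:
  "(\<Sum>oc\<in>{(r, y0, y1) \<in> outputs u v. y0 = H (False # r) \<and> y1 = H (True # r)}. f oc)
   = (\<Sum>oc\<in>outputs u v. gd H oc * f oc)"
proof -
  have e: "{(r, y0, y1) \<in> outputs u v. y0 = H (False # r) \<and> y1 = H (True # r)}
     = {oc \<in> outputs u v. fst (snd oc) = H (False # fst oc) \<and> snd (snd oc) = H (True # fst oc)}"
    by auto
  show ?thesis unfolding e
    by (simp add: sum.inter_filter[OF finite_outputs] gd_def ind_def) (intro sum.cong refl, auto)
qed

lemma FF_card_pos: "card (bits (u+1) \<rightarrow>\<^sub>E bits v) > 0"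
proof -
  have "(\<lambda>x\<in>bits (u+1). replicate v False) \<in> bits (u+1) \<rightarrow>\<^sub>E bits v" by (auto simp: bits_def)
  moreover have "finite (bits (u+1) \<rightarrow>\<^sub>E bits v)" by (simp add: finite_PiE finite_bits)
  ultimately show ?thesis using card_gt_0_iff by blast
qed

theorem mainTheorem4:
  fixes u v m :: nat
    and M :: "bool list \<times> bool list \<times> bool list \<Rightarrow> (bool list \<times> bool list) list \<Rightarrow> (bool list \<times> bool list) list \<Rightarrow> complex"
  assumes "u > 0" and "v > 0"
    and "is_povm (basis u v m) (outputs u v) M"
  shows "success_prob u v m M \<le> (2 * real m + 1) ^ 4 * (2 powr (- real u) + 2 powr (- real v))"
proof -
  note P = assms(3)
  let ?N = "real (card (bits (u+1) \<rightarrow>\<^sub>E bits v))"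
  let ?S = "(\<Sum>H\<in>bits (u+1) \<rightarrow>\<^sub>E bits v. \<Sum>oc\<in>outputs u v. gd H oc * outcome_prob (basis u v m) M oc (psi_tensor u H))"
  have Npos: "?N > 0" using FF_card_pos[of u v] by simp
  have sp: "success_prob u v m M = ?S / ?N"
    unfolding success_prob_def good_set_sum ..
  have pu: "2 powr (- real u) = 1 / 2^u" by (simp add: powr_minus powr_realpow divide_inverse)
  have pv: "2 powr (- real v) = 1 / 2^v" by (simp add: powr_minus powr_realpow divide_inverse)
  show ?thesis
  proof (cases "m = 0")
    case True
    have "?S \<le> ?N / 2^v" using main_zero[OF P True] by simp
    hence "?S / ?N \<le> 1 / 2^v" using Npos by (simp add: field_simps)
    also have "\<dots> \<le> 1 / 2^u + 1 / 2^v" by simp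
    finally show ?thesis using True sp pu pv by simp
  next
    case False
    have "?S \<le> ?N * ((4 + 4 * m) / 2^v + (real m)^2 / 2^u)" using main_pos[OF P] by simp
    hence "?S / ?N \<le> (4 + 4 * m) / 2^v + (real m)^2 / 2^u" using Npos by (simp add: field_simps)
    also have "\<dots> \<le> (2 * real m + 1) ^ 4 * (1 / 2^v) + (2 * real m + 1) ^ 4 * (1 / 2^u)"
    proof (intro add_mono)
      have m1: "real m \<ge> 1" using False by simp
      have a: "(2 * real m + 1) ^ 2 \<ge> 1" using m1 by simp
      have mm: "real m * real m \<ge> 1" using mult_mono[OF m1 m1] by simp
      have b: "(2 * real m + 1) ^ 4 = (2 * real m + 1) ^ 2 * (2 * real m + 1) ^ 2"
        by (simp add: power2_eq_square power4_eq_xxxx)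
      have c: "(2 * real m + 1) ^ 2 \<ge> 4 + 4 * real m" using m1 mm by (simp add: power2_eq_square algebra_simps)
      have d: "(2 * real m + 1) ^ 2 \<ge> (real m)^2" using m1 mm by (simp add: power2_eq_square algebra_simps)
      have "(2 * real m + 1) ^ 2 \<le> (2 * real m + 1) ^ 4" unfolding b using a
        using mult_left_mono[OF a, of "(2 * real m + 1) ^ 2"] by simp
      hence c': "4 + 4 * real m \<le> (2 * real m + 1) ^ 4" "(real m)^2 \<le> (2 * real m + 1) ^ 4"
        using c d by linarith+
      show "(4 + 4 * m) / 2^v \<le> (2 * real m + 1) ^ 4 * (1 / 2^v)"
        using c'(1) by (simp add: divide_right_mono)
      show "(real m)^2 / 2^u \<le> (2 * real m + 1) ^ 4 * (1 / 2^u)"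
        using c'(2) by (simp add: divide_right_mono)
    qed
    finally show ?thesis using sp pu pv by (simp add: algebra_simps)
  qed
qed

end
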